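(* Let $\epsilon\in(0,1)$, $u_0\in\mathbb{R}$, $h>0$, and let $(u_n)_{n\ge0}$ be a sequence of real numbers starting at $u_0$ and satisfying the modified Crank–Nicolson scheme $$\frac{u_n-u_{n-1}}{h}+\frac{1}{\epsilon^2}\,\frac{u_n+u_{n-1}}{2}\left(\frac{u_n^2+u_{n-1}^2}{2}-1\right)=0,\qquad n\ge1.$$ (i) If $u_0\in\{0,1,-1\}$ and $h\le2\epsilon^2$, then $u_n=\mathrm{sign}(u_0)$ for all $n\ge1$. (ii) If $u_0\notin\{0,1,-1\}$, define $h^*=h^*(u_0,\epsilon)=\frac{4\epsilon^2}{u_0^2+2|u_0|+1}$ if $|u_0|>1$ and $h^*=\epsilon^2$ if $0<|u_0|<1$. Then $h^*>0$ and for every $h\in(0,h^*]$ the sequence $(u_n)$ is monotone and converges to $\mathrm{sign}(u_0)$ as $n\to\infty$.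
   Context: The scheme discretizes the ODE $u'(t)+\frac{1}{\epsilon^2}(u^3-u)=0$, $u(0)=u_0$; equivalently the nonlinear term is $\frac{F(u_n)-F(u_{n-1})}{u_n-u_{n-1}}$ with $F(u)=\frac14(u^2-1)^2$. For $h\le2\epsilon^2$ each step equation has a unique real solution. Here $\mathrm{sign}(0)=0$. *)

theory Defs
  imports Complex_Main
begin

definition mcn_step :: "real \<Rightarrow> real \<Rightarrow> real \<Rightarrow> real \<Rightarrow> bool" where
  "mcn_step eps h w v \<longleftrightarrow>
     (v - w) / h + (1 / eps^2) * ((v + w) / 2) * ((v^2 + w^2) / 2 - 1) = 0"

definition hstar :: "real \<Rightarrow> real \<Rightarrow> real" where
  "hstar u0 eps = (if \<bar>u0\<bar> > 1 then 4 * eps^2 / (u0^2 + 2 * \<bar>u0\<bar> + 1) else eps^2)"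

end

theory Submission
  imports Defs
begin

definition G :: "real \<Rightarrow> real \<Rightarrow> real \<Rightarrow> real" where
  "G k w v = v - w + k/4*(v+w)*(v^2+w^2-2)"

lemma step_G:
  assumes "0 < h" "0 < eps"
  shows "mcn_step eps h w v \<longleftrightarrow> G (h/eps^2) w v = 0"
proof -
  have "(v - w) / h + (1 / eps^2) * ((v + w) / 2) * ((v^2 + w^2) / 2 - 1) = G (h/eps^2) w v / h"
    using assms unfolding G_def by (simp add: field_simps power2_eq_square)
  then show ?thesis using assms unfolding mcn_step_def by simp
qed

lemma G_mono:
  assumes "0 \<le> k" "k < 2" "a < b"
  shows "G k w a < G k w b"
proof -
  have Q: "a*a+a*b+b*b+w*(a+b)+w*w \<ge> 0"
  proof -
    have "a*a+a*b+b*b+w*(a+b)+w*w = ((a+b)^2+(a+w)^2+(b+w)^2)/2"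
      by (simp add: power2_eq_square algebra_simps)
    also have "\<dots> \<ge> 0" by simp
    finally show ?thesis .
  qed
  have f: "1 + k/4*(a*a+a*b+b*b+w*(a+b)+w*w-2) > 0"
  proof -
    have "k/4*(a*a+a*b+b*b+w*(a+b)+w*w) \<ge> 0" using Q assms by simp
    moreover have "1 + k/4*(a*a+a*b+b*b+w*(a+b)+w*w-2) = 1 - k/2 + k/4*(a*a+a*b+b*b+w*(a+b)+w*w)"
      by (simp add: algebra_simps)
    ultimately show ?thesis using assms by linarith
  qed
  have "G k w b - G k w a = (b-a)*(1 + k/4*(a*a+a*b+b*b+w*(a+b)+w*w-2))"
    unfolding G_def by (simp add: power2_eq_square field_simps)
  also have "\<dots> > 0" using f assms by simp
  finally show ?thesis by simp
qed

lemma G_le: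
  assumes "0 \<le> k" "k < 2" "G k w v = 0" "G k w c \<le> 0"
  shows "c \<le> v"
proof (rule ccontr)
  assume "\<not> c \<le> v"
  then have "G k w v < G k w c" using G_mono[OF assms(1,2), of v c w] by simp
  then show False using assms by simp
qed

lemma G_ge:
  assumes "0 \<le> k" "k < 2" "G k w v = 0" "G k w c \<ge> 0"
  shows "v \<le> c"
proof (rule ccontr)
  assume "\<not> v \<le> c"
  then have "G k w c < G k w v" using G_mono[OF assms(1,2), of c v w] by simp
  then show False using assms by simp
qed

lemma G_lt:
  assumes "0 \<le> k" "k < 2" "G k w v = 0" "G k w c > 0"
  shows "v < c"
proof (rule ccontr)
  assume "\<not> v < c"
  then have "G k w c \<le> G k w v" using G_mono[OF assms(1,2), of c v w] by (cases "c = v") auto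
  then show False using assms by simp
qed

lemma G_self: "G k w w = k*w*(w^2-1)"
  unfolding G_def by (simp add: power2_eq_square algebra_simps)

lemma G_one: "G k w 1 = (1-w)*(1 - k/4*(1+w)^2)"
  unfolding G_def by (simp add: power2_eq_square field_simps)

lemma G_neg: "G k (-w) (-v) = - G k w v"
  unfolding G_def by (simp add: power2_eq_square field_simps)

lemma self_nonpos:
  assumes "0 \<le> k" "0 \<le> w" "w \<le> 1"
  shows "G k w w \<le> 0"
proof -
  have "w^2 \<le> 1" using assms by (simp add: power_le_one)
  then show ?thesis unfolding G_self using assms by (intro mult_nonneg_nonpos) auto
qed

lemma self_nonneg:
  assumes "0 \<le> k" "1 \<le> w"
  shows "G k w w \<ge> 0"
proof -
  have "1 \<le> w^2" using assms by (simp add: one_le_power)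
  then show ?thesis unfolding G_self using assms by (intro mult_nonneg_nonneg) auto
qed

lemma fixed_limit:
  assumes "\<And>n. G k (u n) (u (Suc n)) = 0" "u \<longlonglongrightarrow> L"
  shows "G k L L = 0"
proof -
  have "(\<lambda>n. u (Suc n)) \<longlonglongrightarrow> L" using assms(2) by (rule LIMSEQ_Suc)
  then have "(\<lambda>n. G k (u n) (u (Suc n))) \<longlonglongrightarrow> G k L L"
    unfolding G_def using assms(2) by (intro tendsto_intros)
  then have "(\<lambda>n. 0::real) \<longlonglongrightarrow> G k L L" using assms(1) by simp
  then show ?thesis using LIMSEQ_unique[OF _ tendsto_const] by metis
qed

lemma small_step:
  assumes k: "0 < k" "k \<le> 1" and w: "0 < w" "w < 1" and st: "G k w v = 0"
  shows "w \<le> v \<and> v < 1"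
proof -
  have "(1+w)^2 < 2^2" using w by (intro power_strict_mono) auto
  moreover have "k*(1+w)^2 \<le> 1*(1+w)^2" using k by (intro mult_right_mono) auto
  ultimately have "k*(1+w)^2 < 4" by simp
  then have "k/4*(1+w)^2 < 1" by simp
  then have g1: "G k w 1 > 0" unfolding G_one using w by simp
  have "G k w w \<le> 0" using w k self_nonpos by simp
  then show ?thesis using G_le[OF _ _ st] G_lt[OF _ _ st g1] k by simp
qed

lemma pos_small:
  assumes k: "0 < k" "k \<le> 1" and u0: "0 < u 0" "u 0 < 1"
    and st: "\<And>n. G k (u n) (u (Suc n)) = 0"
  shows "mono u \<and> u \<longlonglongrightarrow> 1"
proof -
  have inv: "0 < u n \<and> u n < 1" for n
  proof (induction n)
    case 0 then show ?case using u0 by simp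
  next
    case (Suc n) then show ?case using small_step[OF k _ _ st[of n]] by force
  qed
  have m: "mono u" using inv small_step[OF k _ _ st] by (simp add: incseq_SucI)
  obtain L where L: "u \<longlonglongrightarrow> L" "\<And>i. u i \<le> L"
    using incseq_convergent[OF m, of 1] inv less_imp_le by blast
  have "L \<le> 1" using L(1) inv by (intro LIMSEQ_le_const2[of u]) (auto intro: less_imp_le)
  moreover have "L > 0" using L(2)[of 0] u0 by simp
  moreover have "G k L L = 0" using fixed_limit[OF st L(1)] .
  ultimately have "L = 1" using k unfolding G_self
    by (simp add: power2_eq_1_iff)
  then show ?thesis using m L by simp
qed

lemma large_step:
  assumes k: "0 < k" "k*(1+u0)^2 \<le> 4" and w: "1 \<le> w" "w \<le> u0" and st: "G k w v = 0"
  shows "1 \<le> v \<and> v \<le> w"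
proof -
  have "2^2 \<le> (1+u0)^2" using w by (intro power_mono) auto
  then have "k*4 \<le> k*(1+u0)^2" using k by (intro mult_left_mono) auto
  then have k2: "k < 2" using k by linarith
  have "(1+w)^2 \<le> (1+u0)^2" using w by (intro power_mono) auto
  then have "k*(1+w)^2 \<le> k*(1+u0)^2" using k by (intro mult_left_mono) auto
  then have "k*(1+w)^2 \<le> 4" using k by linarith
  then have "0 \<le> 1 - k/4*(1+w)^2" by simp
  then have g1: "G k w 1 \<le> 0" unfolding G_one using w by (intro mult_nonpos_nonneg) auto
  have "G k w w \<ge> 0" using w k self_nonneg by simp
  then show ?thesis using G_le[OF _ k2 st g1] G_ge[OF _ k2 st] k by simp
qed

lemma pos_large:
  assumes k: "0 < k" "k*(1+u 0)^2 \<le> 4" and u0: "1 < u 0"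
    and st: "\<And>n. G k (u n) (u (Suc n)) = 0"
  shows "antimono u \<and> u \<longlonglongrightarrow> 1"
proof -
  have inv: "1 \<le> u n \<and> u n \<le> u 0" for n
  proof (induction n)
    case 0 then show ?case using u0 by simp
  next
    case (Suc n) then show ?case using large_step[OF k _ _ st[of n]] by force
  qed
  have m: "decseq u" using inv large_step[OF k _ _ st] by (simp add: decseq_SucI)
  obtain L where L: "u \<longlonglongrightarrow> L" "\<And>i. L \<le> u i"
    using decseq_convergent[OF m, of 1] inv by blast
  have "1 \<le> L" using L(1) inv by (intro LIMSEQ_le_const[of u]) auto
  moreover have "G k L L = 0" using fixed_limit[OF st L(1)] .
  ultimately have "L = 1" using k unfolding G_self
    by (simp add: power2_eq_1_iff)
  then show ?thesis using m L by simp
qed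

lemma fixed_pt:
  assumes k: "0 < k" "k \<le> 2" and w: "w \<in> {0, 1, -1}" and st: "G k w v = 0"
  shows "v = w"
proof -
  consider "w = 0" | "w = 1" | "w = -1" using w by auto
  then show ?thesis
  proof cases
    case 1
    have e: "G k w v = v * ((1 - k/2) + k/4*v^2)" unfolding 1 G_def
      by (simp add: power2_eq_square field_simps)
    show ?thesis
    proof (rule ccontr)
      assume "v \<noteq> w"
      then have "v \<noteq> 0" using 1 by simp
      then have "k/4*v^2 > 0" using k by simp
      then have "(1 - k/2) + k/4*v^2 > 0" using k by simp
      then show False using e st \<open>v \<noteq> 0\<close> by simp
    qed
  next
    case 2
    have e: "G k w v = (v - 1) * (1 + k/4*(v+1)^2)" unfolding 2 G_def
      by (simp add: power2_eq_square field_simps)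
    have "1 + k/4*(v+1)^2 > 0" using k by (simp add: add_pos_nonneg)
    then show ?thesis using e st 2 by simp
  next
    case 3
    have e: "G k w v = (v + 1) * (1 + k/4*(v-1)^2)" unfolding 3 G_def
      by (simp add: power2_eq_square field_simps)
    have "1 + k/4*(v-1)^2 > 0" using k by (simp add: add_pos_nonneg)
    then show ?thesis using e st 3 by simp
  qed
qed

lemma pos_case:
  assumes k: "0 < k" and u0: "0 < u 0" "u 0 \<noteq> 1"
    and hk: "(1 < u 0 \<longrightarrow> k*(1+u 0)^2 \<le> 4) \<and> (u 0 < 1 \<longrightarrow> k \<le> 1)"
    and st: "\<And>n. G k (u n) (u (Suc n)) = 0"
  shows "(mono u \<or> antimono u) \<and> u \<longlonglongrightarrow> 1"
proof (cases "1 < u 0")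
  case True then show ?thesis using pos_large[OF k _ True st] hk by simp
next
  case False then have "u 0 < 1" using u0 by simp
  then show ?thesis using pos_small[OF k _ u0(1) _ st] hk by simp
qed

theorem theorem3p5:
  fixes eps u0 h :: real and u :: "nat \<Rightarrow> real"
  assumes eps: "0 < eps" "eps < 1"
    and h: "0 < h"
    and init: "u 0 = u0"
    and scheme: "\<And>n. n \<ge> 1 \<Longrightarrow> mcn_step eps h (u (n - 1)) (u n)"
  shows "(u0 \<in> {0, 1, -1} \<and> h \<le> 2 * eps^2 \<longrightarrow> (\<forall>n\<ge>1. u n = sgn u0)) \<and>
         (u0 \<notin> {0, 1, -1} \<longrightarrow>
           hstar u0 eps > 0 \<and>
           (h \<le> hstar u0 eps \<longrightarrow> (mono u \<or> antimono u) \<and> u \<longlonglongrightarrow> sgn u0))"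
proof -
  define k where "k = h / eps^2"
  have k0: "0 < k" unfolding k_def using h eps by simp
  have st: "G k (u n) (u (Suc n)) = 0" for n
    using scheme[of "Suc n"] step_G[OF h eps(1)] unfolding k_def by simp
  have part1: "u0 \<in> {0, 1, -1} \<and> h \<le> 2 * eps^2 \<longrightarrow> (\<forall>n\<ge>1. u n = sgn u0)"
  proof (intro impI allI)
    assume a: "u0 \<in> {0, 1, -1} \<and> h \<le> 2 * eps^2"
    then have k2: "k \<le> 2" unfolding k_def using eps by (simp add: pos_divide_le_eq)
    have all: "u n = u0" for n
    proof (induction n)
      case 0 then show ?case using init by simp
    next
      case (Suc n) then show ?case using fixed_pt[OF k0 k2 _ st[of n]] a by simp
    qed
    have "sgn u0 = u0" using a by auto
    then show "n \<ge> 1 \<Longrightarrow> u n = sgn u0" for n using all by simp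
  qed
  have part2: "u0 \<notin> {0, 1, -1} \<longrightarrow> hstar u0 eps > 0 \<and>
           (h \<le> hstar u0 eps \<longrightarrow> (mono u \<or> antimono u) \<and> u \<longlonglongrightarrow> sgn u0)"
  proof (rule impI, rule conjI)
    assume a: "u0 \<notin> {0, 1, -1}"
    have pos: "u0^2 + 2 * \<bar>u0\<bar> + 1 > 0" by (simp add: add_nonneg_pos)
    show "hstar u0 eps > 0" unfolding hstar_def using eps pos by simp
    show "h \<le> hstar u0 eps \<longrightarrow> (mono u \<or> antimono u) \<and> u \<longlonglongrightarrow> sgn u0"
    proof
    assume hh: "h \<le> hstar u0 eps"
    have hk: "(1 < \<bar>u0\<bar> \<longrightarrow> k*(1+\<bar>u0\<bar>)^2 \<le> 4) \<and> (\<bar>u0\<bar> < 1 \<longrightarrow> k \<le> 1)"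
    proof (intro conjI impI)
      assume "1 < \<bar>u0\<bar>"
      then have "h \<le> 4 * eps^2 / (u0^2 + 2 * \<bar>u0\<bar> + 1)" using hh unfolding hstar_def by simp
      then have "h * (u0^2 + 2 * \<bar>u0\<bar> + 1) \<le> 4 * eps^2" using pos by (simp add: pos_le_divide_eq)
      moreover have "(1+\<bar>u0\<bar>)^2 = u0^2 + 2 * \<bar>u0\<bar> + 1" by (simp add: power2_eq_square algebra_simps)
      ultimately show "k*(1+\<bar>u0\<bar>)^2 \<le> 4" unfolding k_def using eps by (simp add: pos_divide_le_eq)
    next
      assume "\<bar>u0\<bar> < 1"
      then have "h \<le> eps^2" using hh unfolding hstar_def by simp
      then show "k \<le> 1" unfolding k_def using eps by simp
    qed
    show "(mono u \<or> antimono u) \<and> u \<longlonglongrightarrow> sgn u0"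
    proof (cases "u0 > 0")
      case True
      then show ?thesis using pos_case[OF k0, of u] init a hk st by simp
    next
      case False
      then have neg: "u0 < 0" using a by auto
      define v where "v n = - u n" for n
      have stv: "G k (v n) (v (Suc n)) = 0" for n unfolding v_def using st[of n] G_neg by simp
      have r: "(mono v \<or> antimono v) \<and> v \<longlonglongrightarrow> 1"
        using pos_case[OF k0, of v] init a hk stv neg unfolding v_def by simp
      have u_eq: "u = (\<lambda>n. - v n)" unfolding v_def by simp
      have "mono u \<or> antimono u" using r unfolding u_eq monotone_def by auto
      moreover have "u \<longlonglongrightarrow> -1" unfolding u_eq using r by (intro tendsto_minus) auto
      ultimately show ?thesis using neg by simp
    qed
    qed
  qed
  show ?thesis using part1 part2 by blast
qed

end
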